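(* If $G$ is a connected digraph that is not regular, then $\vec{\chi}(G) \leq \Delta_{max}(G)$.
   Context: Digraphs have no loops and no parallel arcs, but may contain digons. A digraph is connected if its underlying undirected graph is connected. A digraph is $k$-regular if $d^+(v)=d^-(v)=k$ for every vertex $v$; it is regular if it is $k$-regular for some $k$. $\vec{\chi}(G)$ is the dichromatic number (minimum number of colours in a colouring of $V(G)$ with no monochromatic directed cycle), and $\Delta_{max}(G)=\max_v \max(d^+(v),d^-(v))$. *)

theory Defs
  imports Main
begin

text \<open>A digraph is given by a finite vertex set V and an arc relation A \<subseteq> V \<times> V
  without loops (parallel arcs are impossible since A is a set; digons allowed).\<close>

definition digraph :: "'a set \<Rightarrow> ('a \<times> 'a) set \<Rightarrow> bool" where
  "digraph V A \<longleftrightarrow> finite V \<and> A \<subseteq> V \<times> V \<and> (\<forall>v. (v, v) \<notin> A)"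

definition out_deg :: "('a \<times> 'a) set \<Rightarrow> 'a \<Rightarrow> nat" where
  "out_deg A v = card {w. (v, w) \<in> A}"

definition in_deg :: "('a \<times> 'a) set \<Rightarrow> 'a \<Rightarrow> nat" where
  "in_deg A v = card {u. (u, v) \<in> A}"

definition dconnected :: "'a set \<Rightarrow> ('a \<times> 'a) set \<Rightarrow> bool" where
  "dconnected V A \<longleftrightarrow> (\<forall>u\<in>V. \<forall>v\<in>V. (u, v) \<in> (A \<union> A\<inverse>)\<^sup>*)"

definition k_regular :: "'a set \<Rightarrow> ('a \<times> 'a) set \<Rightarrow> nat \<Rightarrow> bool" where
  "k_regular V A k \<longleftrightarrow> (\<forall>v\<in>V. out_deg A v = k \<and> in_deg A v = k)"

definition regular :: "'a set \<Rightarrow> ('a \<times> 'a) set \<Rightarrow> bool" where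
  "regular V A \<longleftrightarrow> (\<exists>k. k_regular V A k)"

definition acyclic_colouring :: "'a set \<Rightarrow> ('a \<times> 'a) set \<Rightarrow> nat \<Rightarrow> ('a \<Rightarrow> nat) \<Rightarrow> bool" where
  "acyclic_colouring V A k c \<longleftrightarrow> (\<forall>v\<in>V. c v < k) \<and>
     (\<forall>i<k. acyclic (A \<inter> ({v\<in>V. c v = i} \<times> {v\<in>V. c v = i})))"

definition dichromatic_number :: "'a set \<Rightarrow> ('a \<times> 'a) set \<Rightarrow> nat" where
  "dichromatic_number V A = (LEAST k. \<exists>c. acyclic_colouring V A k c)"

definition Delta_max :: "'a set \<Rightarrow> ('a \<times> 'a) set \<Rightarrow> nat" where
  "Delta_max V A = Max ({0} \<union> (\<lambda>v. max (out_deg A v) (in_deg A v)) ` V)"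

end

theory Submission imports Defs begin

lemma sink_acyclic:
  assumes "acyclic R" "\<And>x y. (x,y)\<in>R' \<Longrightarrow> (x,y)\<in>R \<or> y = u" "\<And>z. (u,z) \<notin> R'"
  shows "acyclic R'"
proof -
  have *: "(x,y)\<in>R\<^sup>+ \<or> y = u" if "(x,y)\<in>R'\<^sup>+" for x y
    using that
  proof (induction rule: trancl_induct)
    case (base y) then show ?case using assms(2) by blast
  next
    case (step y z)
    show ?case
    proof (cases "y = u")
      case True then show ?thesis using step(2) assms(3) by blast
    next
      case False
      then have "(x,y)\<in>R\<^sup>+" using step(3) by blast
      moreover have "(y,z)\<in>R \<or> z = u" using assms(2) step(2) by blast
      ultimately show ?thesis by (meson trancl.trancl_into_trancl)
    qed
  qed
  show ?thesis unfolding acyclic_def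
  proof (intro allI notI)
    fix x assume x: "(x,x)\<in>R'\<^sup>+"
    show False
    proof (cases "x = u")
      case True then show False using x assms(3) by (metis tranclD)
    next
      case False then show False using *[OF x] assms(1) unfolding acyclic_def by blast
    qed
  qed
qed

lemma free_colour:
  assumes "finite N" "card N < (k::nat)"
  obtains a where "a < k" "a \<notin> c ` N"
proof -
  have "card (c ` N) < k" using assms card_image_le le_less_trans by blast
  then have "\<not> {..<k} \<subseteq> c ` N" using assms
    by (metis card_lessThan card_mono finite_imageI not_le)
  then show ?thesis using that by blast
qed

lemma greedy:
  fixes A :: "('a \<times> 'a) set" and k :: nat
  assumes "distinct xs" "\<forall>v. (v,v) \<notin> A"
    and "\<forall>i<length xs. card {w\<in>set (take i xs). (xs!i,w)\<in>A} < k
                      \<or> card {w\<in>set (take i xs). (w,xs!i)\<in>A} < k"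
  shows "\<exists>c. (\<forall>v\<in>set xs. c v < k) \<and>
             (\<forall>i<k. acyclic (A \<inter> ({v\<in>set xs. c v = i} \<times> {v\<in>set xs. c v = i})))"
  using assms(1,3)
proof (induction xs rule: rev_induct)
  case Nil
  show ?case by (rule exI[of _ "\<lambda>_. 0"]) (simp add: acyclic_def)
next
  case (snoc u xs)
  have dxs: "distinct xs" and uxs: "u \<notin> set xs" using snoc.prems(1) by auto
  have "\<forall>i<length xs. card {w\<in>set (take i xs). (xs!i,w)\<in>A} < k
                      \<or> card {w\<in>set (take i xs). (w,xs!i)\<in>A} < k"
  proof (intro allI impI)
    fix i assume "i < length xs"
    then show "card {w\<in>set (take i xs). (xs!i,w)\<in>A} < k
                      \<or> card {w\<in>set (take i xs). (w,xs!i)\<in>A} < k"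
      using snoc.prems(2)[rule_format, of i] by (simp add: nth_append)
  qed
  then obtain c where c1: "\<forall>v\<in>set xs. c v < k"
    and c2: "\<forall>i<k. acyclic (A \<inter> ({v\<in>set xs. c v = i} \<times> {v\<in>set xs. c v = i}))"
    using snoc.IH dxs by blast
  define N1 where "N1 = {w\<in>set xs. (u,w)\<in>A}"
  define N2 where "N2 = {w\<in>set xs. (w,u)\<in>A}"
  have cond: "card N1 < k \<or> card N2 < k"
    using snoc.prems(2)[rule_format, of "length xs"] unfolding N1_def N2_def by simp
  have fin: "finite N1" "finite N2" unfolding N1_def N2_def by auto
  obtain a where a: "a < k" "a \<notin> c ` N1 \<or> a \<notin> c ` N2"
    using cond fin free_colour by metis
  define c' where "c' = c(u := a)"
  have cls: "{v\<in>set (xs@[u]). c' v = i} = (if i = a then insert u {v\<in>set xs. c v = i} else {v\<in>set xs. c v = i})" for i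
    using uxs unfolding c'_def by auto
  have "acyclic (A \<inter> ({v\<in>set (xs@[u]). c' v = i} \<times> {v\<in>set (xs@[u]). c' v = i}))" if i: "i < k" for i
  proof (cases "i = a")
    case False
    then show ?thesis using cls c2 i by simp
  next
    case True
    define C where "C = {v\<in>set xs. c v = a}"
    define R where "R = A \<inter> (C \<times> C)"
    define R' where "R' = A \<inter> (insert u C \<times> insert u C)"
    have R: "acyclic R" unfolding R_def C_def using c2 a(1) by blast
    have "acyclic R'"
      using a(2)
    proof
      assume na: "a \<notin> c ` N1"
      show ?thesis
      proof (rule sink_acyclic[OF R])
        show "(x, y) \<in> R \<or> y = u" if "(x, y) \<in> R'" for x y
          using that na assms(2) using uxs unfolding R_def R'_def C_def N1_def by (auto simp: image_iff)
        show "(u, z) \<notin> R'" for z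
          using na assms(2) uxs unfolding R'_def C_def N1_def by (auto simp: image_iff)
      qed
    next
      assume na: "a \<notin> c ` N2"
      have "acyclic (R'\<inverse>)"
      proof (rule sink_acyclic[of "R\<inverse>"])
        show "acyclic (R\<inverse>)" using R by (simp add: acyclic_converse)
        show "(x, y) \<in> R\<inverse> \<or> y = u" if "(x, y) \<in> R'\<inverse>" for x y
          using that na assms(2) using uxs unfolding R_def R'_def C_def N2_def by (auto simp: image_iff)
        show "(u, z) \<notin> R'\<inverse>" for z
          using na assms(2) uxs unfolding R'_def C_def N2_def by (auto simp: image_iff)
      qed
      then show ?thesis by (simp add: acyclic_converse)
    qed
    then show ?thesis using True cls unfolding R'_def C_def by simp
  qed
  moreover have "\<forall>v\<in>set (xs@[u]). c' v < k" using c1 a(1) unfolding c'_def by auto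
  ultimately show ?case by blast
qed

lemma escape:
  assumes "(x,y) \<in> R\<^sup>*" "x \<in> S" "y \<notin> S"
  shows "\<exists>a b. (a,b) \<in> R \<and> a \<in> S \<and> b \<notin> S"
  using assms by (induction rule: rtrancl_induct) auto

lemma order_exists:
  assumes fin: "finite V" and AV: "A \<subseteq> V \<times> V" and r: "r \<in> V"
    and con: "\<forall>v\<in>V. (r,v) \<in> (A \<union> A\<inverse>)\<^sup>*"
  shows "\<exists>xs. distinct xs \<and> set xs = V \<and> (\<forall>i<length xs. xs!i \<noteq> r \<longrightarrow>
           (\<exists>j. i<j \<and> j<length xs \<and> ((xs!i,xs!j)\<in>A \<or> (xs!j,xs!i)\<in>A)))"
proof -
  let ?P = "\<lambda>xs. (\<forall>i<length xs. xs!i \<noteq> r \<longrightarrow>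
           (\<exists>j. i<j \<and> j<length xs \<and> ((xs!i,xs!j)\<in>A \<or> (xs!j,xs!i)\<in>A)))"
  have "1 \<le> n \<longrightarrow> n \<le> card V \<longrightarrow> (\<exists>xs. length xs = n \<and> distinct xs \<and> set xs \<subseteq> V \<and> r \<in> set xs \<and> ?P xs)" for n
  proof (induction n)
    case 0 then show ?case by simp
  next
    case (Suc n)
    show ?case
    proof (cases "n = 0")
      case True
      then show ?thesis using r by (intro impI exI[of _ "[r]"]) auto
    next
      case False
      show ?thesis
      proof (intro impI)
        assume "Suc n \<le> card V"
        then obtain xs where xs: "length xs = n" "distinct xs" "set xs \<subseteq> V" "r \<in> set xs" "?P xs"
          using Suc.IH False by auto
        have "card (set xs) < card V" using xs \<open>Suc n \<le> card V\<close> by (simp add: distinct_card)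
        then have "\<not> V \<subseteq> set xs" by (meson card_mono finite_set not_le)
        then obtain v where v: "v \<in> V" "v \<notin> set xs" by blast
        obtain a b where ab: "(a,b) \<in> A \<union> A\<inverse>" "a \<in> set xs" "b \<notin> set xs"
          using escape[OF con[rule_format, OF v(1)] xs(4) v(2)] by blast
        have bV: "b \<in> V" using ab(1) AV by auto
        obtain j' where j': "j' < length xs" "xs!j' = a" using ab(2) by (meson in_set_conv_nth)
        have "?P (b # xs)"
        proof (intro allI impI)
          fix i assume i: "i < length (b#xs)" "(b#xs)!i \<noteq> r"
          show "\<exists>j>i. j < length (b # xs) \<and> (((b#xs)!i,(b#xs)!j)\<in>A \<or> ((b#xs)!j,(b#xs)!i)\<in>A)"
          proof (cases i)
            case 0
            then show ?thesis using j' ab(1) by (intro exI[of _ "Suc j'"]) auto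
          next
            case (Suc i')
            then obtain j where "i'<j \<and> j<length xs \<and> ((xs!i',xs!j)\<in>A \<or> (xs!j,xs!i')\<in>A)"
              using xs(5) i by auto
            then show ?thesis using Suc by (intro exI[of _ "Suc j"]) auto
          qed
        qed
        then show "\<exists>xs. length xs = Suc n \<and> distinct xs \<and> set xs \<subseteq> V \<and> r \<in> set xs \<and> ?P xs"
          using xs ab(3) bV by (intro exI[of _ "b#xs"]) auto
      qed
    qed
  qed
  moreover have "1 \<le> card V" using fin r by (metis One_nat_def Suc_leI card_gt_0_iff empty_iff)
  ultimately obtain xs where xs: "length xs = card V" "distinct xs" "set xs \<subseteq> V" "?P xs" by blast
  have "set xs = V" using xs fin by (metis card_subset_eq distinct_card)
  then show ?thesis using xs by blast
qed

lemma nth_not_in_take: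
  assumes "distinct xs" "i < j" "j < length xs"
  shows "xs!j \<notin> set (take i xs)"
proof
  assume "xs!j \<in> set (take i xs)"
  then obtain k where k: "k < length (take i xs)" "take i xs ! k = xs!j" by (meson in_set_conv_nth)
  then have "k < i" "xs!k = xs!j" by auto
  then show False using assms nth_eq_iff_index_eq by fastforce
qed

lemma card_lt_deg:
  assumes "finite N" "S \<subseteq> N - {w}" "w \<in> N" "card N \<le> D"
  shows "card S < D"
proof -
  have "card S \<le> card (N - {w})" using assms by (meson card_mono finite_Diff)
  also have "\<dots> < card N" using assms by (meson card_Diff1_less)
  finally show ?thesis using assms(4) by simp
qed

theorem lemma2:
  fixes V :: "'a set" and A :: "('a \<times> 'a) set"
  assumes "digraph V A" and "dconnected V A" and "\<not> regular V A"
  shows "dichromatic_number V A \<le> Delta_max V A"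
proof -
  have fin: "finite V" and AV: "A \<subseteq> V \<times> V" and nl: "\<forall>v. (v,v) \<notin> A"
    using assms(1) unfolding digraph_def by auto
  define D where "D = Delta_max V A"
  have degle: "out_deg A v \<le> D \<and> in_deg A v \<le> D" if "v \<in> V" for v
  proof -
    have "max (out_deg A v) (in_deg A v) \<le> D"
      unfolding D_def Delta_max_def using fin that by (intro Max_ge) auto
    then show ?thesis by simp
  qed
  have finO: "finite {w. (v,w)\<in>A}" for v using AV fin by (metis (no_types, lifting) finite_subset mem_Sigma_iff mem_Collect_eq subset_eq)
  have finI: "finite {w. (w,v)\<in>A}" for v using AV fin by (metis (no_types, lifting) finite_subset mem_Sigma_iff mem_Collect_eq subset_eq)
  have "\<not> k_regular V A D" using assms(3) unfolding regular_def by blast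
  then obtain r where r: "r \<in> V" "out_deg A r \<noteq> D \<or> in_deg A r \<noteq> D" unfolding k_regular_def by blast
  have rlt: "out_deg A r < D \<or> in_deg A r < D" using r degle[OF r(1)] by auto
  have con: "\<forall>v\<in>V. (r,v) \<in> (A \<union> A\<inverse>)\<^sup>*" using assms(2) r(1) unfolding dconnected_def by blast
  obtain xs where xs: "distinct xs" "set xs = V" and P: "\<forall>i<length xs. xs!i \<noteq> r \<longrightarrow>
           (\<exists>j. i<j \<and> j<length xs \<and> ((xs!i,xs!j)\<in>A \<or> (xs!j,xs!i)\<in>A))"
    using order_exists[OF fin AV r(1) con] by blast
  have cond: "\<forall>i<length xs. card {w\<in>set (take i xs). (xs!i,w)\<in>A} < D
                      \<or> card {w\<in>set (take i xs). (w,xs!i)\<in>A} < D"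
  proof (intro allI impI)
    fix i assume i: "i < length xs"
    define u where "u = xs!i"
    have uV: "u \<in> V" using i xs(2) u_def by auto
    show "card {w\<in>set (take i xs). (xs!i,w)\<in>A} < D \<or> card {w\<in>set (take i xs). (w,xs!i)\<in>A} < D"
    proof (cases "u = r")
      case True
      have "card {w\<in>set (take i xs). (u,w)\<in>A} \<le> out_deg A u"
        unfolding out_deg_def using finO by (intro card_mono) auto
      moreover have "card {w\<in>set (take i xs). (w,u)\<in>A} \<le> in_deg A u"
        unfolding in_deg_def using finI by (intro card_mono) auto
      ultimately show ?thesis using rlt True unfolding u_def[symmetric] by (simp only:) linarith
    next
      case False
      then obtain j where j: "i<j" "j<length xs" "(u,xs!j)\<in>A \<or> (xs!j,u)\<in>A"
        using P i u_def by blast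
      have nin: "xs!j \<notin> set (take i xs)" using nth_not_in_take[OF xs(1) j(1,2)] .
      show ?thesis using j(3)
      proof
        assume e: "(u,xs!j)\<in>A"
        have "card {w\<in>set (take i xs). (u,w)\<in>A} < D"
          using nin e degle[OF uV] finO unfolding out_deg_def
          by (intro card_lt_deg[of "{w. (u,w)\<in>A}" _ "xs!j"]) auto
        then show ?thesis using u_def by simp
      next
        assume e: "(xs!j,u)\<in>A"
        have "card {w\<in>set (take i xs). (w,u)\<in>A} < D"
          using nin e degle[OF uV] finI unfolding in_deg_def
          by (intro card_lt_deg[of "{w. (w,u)\<in>A}" _ "xs!j"]) auto
        then show ?thesis using u_def by simp
      qed
    qed
  qed
  obtain c where "(\<forall>v\<in>set xs. c v < D) \<and>
             (\<forall>i<D. acyclic (A \<inter> ({v\<in>set xs. c v = i} \<times> {v\<in>set xs. c v = i})))"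
    using greedy[OF xs(1) nl cond] by blast
  then have "acyclic_colouring V A D c" unfolding acyclic_colouring_def using xs(2) by simp
  then show ?thesis unfolding dichromatic_number_def D_def[symmetric] by (intro Least_le) blast
qed

end
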